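(* Fix any $H\ge2$. For any offline algorithm $\mathrm{Algo}$ (mapping datasets to policies) and any coefficients $\{\kappa_h\}_{h\ge1}$ with $\kappa_h\ge2$, there exist a linear MDP $\mathcal{M}=(\mathcal{S},\mathcal{A},H,\mathbb{P},r,d_0)$ with positive minimum sub-optimality gap $\Delta_{\min}>0$ and a behavior policy $\mu$ generating a dataset $\mathcal{D}=\{(s_h^t,a_h^t,r_h^t)\}_{h\in[H]}^{t\in[K]}\sim\mathcal{P}(\cdot\mid\mathcal{M},\mu)$ with $\sup_{s_h,a_h}\frac{d^{\mathcal{M},*}_h(s_h,a_h)}{d^{\mathcal{M},\mu}_h(s_h,a_h)}\le\kappa_h$ for all $h\in[H]$, such that \[ \mathbb{E}_{\mathcal{D}\sim\mathcal{M}}[\mathrm{SubOpt}(\mathrm{Algo}(\mathcal{D});\mathcal{M})]=\Omega\Big(\frac{\kappa_{\min}H^2}{K\Delta_{\min}}\Big), \] where $\kappa_{\min}=\min\{\kappa_h:h\in[H]\}$.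
   Context: Episodic MDP with horizon $H$, initial distribution $d_0$, transitions $\mathbb{P}_h$, mean rewards $r_h\in[0,1]$. For a policy $\pi$, $V^\pi_h,Q^\pi_h$ are its value functions and $V^*,Q^*$ the optimal ones; $d^{\mathcal{M},\pi}_h(s,a)$ is the state-action visitation density at step $h$ under $\pi$ in $\mathcal{M}$, and $d^{\mathcal{M},*}_h$ that of an optimal policy. $\mathrm{SubOpt}(\pi;\mathcal{M})=\mathbb{E}_{s\sim d_0}[V^*_1(s)-V^\pi_1(s)]$. Linear MDP: there are known features $\phi_h:\mathcal{S}\times\mathcal{A}\to\mathbb{R}^d$, $\|\phi_h\|_2\le1$, with $r_h(s,a)=\phi_h(s,a)^T\theta_h$ and $\mathbb{P}_h(s'|s,a)=\phi_h(s,a)^T\mu_h(s')$. Sub-optimality gaps $\Delta_h(s,a)=V^*_h(s)-Q^*_h(s,a)$, $\Delta_{\min}=\min_{s,a,h}\{\Delta_h(s,a):\Delta_h(s,a)\neq0\}$. The dataset consists of $K$ episodes of trajectories generated by running $\mu$ in $\mathcal{M}$. *)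

theory Defs
  imports "HOL-Probability.Probability"
begin

text \<open>Episodic MDP over countable state and action spaces (both encoded as nat).
  Steps are indexed h = 1..H. Rewards are random (reward distribution rew),
  mean rewards are their expectations.\<close>

record mdp =
  init  :: "nat pmf"
  trans :: "nat \<Rightarrow> nat \<Rightarrow> nat \<Rightarrow> nat pmf"
  rew   :: "nat \<Rightarrow> nat \<Rightarrow> nat \<Rightarrow> real pmf"

text \<open>Markov (possibly stochastic) policies: \<pi> h s is a distribution over actions.\<close>
type_synonym policy = "nat \<Rightarrow> nat \<Rightarrow> nat pmf"

type_synonym dataset = "(nat \<times> nat \<times> real) list list"

definition mean_rew :: "mdp \<Rightarrow> nat \<Rightarrow> nat \<Rightarrow> nat \<Rightarrow> real" where
  "mean_rew M h s a = measure_pmf.expectation (rew M h s a) (\<lambda>x. x)"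

text \<open>Value of policy \<pi> with k steps to go (current step H - k + 1).\<close>
fun Vpi_aux :: "nat \<Rightarrow> mdp \<Rightarrow> policy \<Rightarrow> nat \<Rightarrow> nat \<Rightarrow> real" where
  "Vpi_aux H M \<pi> 0 s = 0"
| "Vpi_aux H M \<pi> (Suc k) s =
     measure_pmf.expectation (\<pi> (H - k) s)
       (\<lambda>a. mean_rew M (H - k) s a
             + measure_pmf.expectation (trans M (H - k) s a) (Vpi_aux H M \<pi> k))"

definition Vpi :: "nat \<Rightarrow> mdp \<Rightarrow> policy \<Rightarrow> nat \<Rightarrow> nat \<Rightarrow> real" where
  "Vpi H M \<pi> h s = Vpi_aux H M \<pi> (H + 1 - h) s"

definition Qpi :: "nat \<Rightarrow> mdp \<Rightarrow> policy \<Rightarrow> nat \<Rightarrow> nat \<Rightarrow> nat \<Rightarrow> real" where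
  "Qpi H M \<pi> h s a = mean_rew M h s a + measure_pmf.expectation (trans M h s a) (Vpi H M \<pi> (h + 1))"

fun Vstar_aux :: "nat \<Rightarrow> mdp \<Rightarrow> nat \<Rightarrow> nat \<Rightarrow> real" where
  "Vstar_aux H M 0 s = 0"
| "Vstar_aux H M (Suc k) s =
     (SUP a. mean_rew M (H - k) s a
             + measure_pmf.expectation (trans M (H - k) s a) (Vstar_aux H M k))"

definition Vstar :: "nat \<Rightarrow> mdp \<Rightarrow> nat \<Rightarrow> nat \<Rightarrow> real" where
  "Vstar H M h s = Vstar_aux H M (H + 1 - h) s"

definition Qstar :: "nat \<Rightarrow> mdp \<Rightarrow> nat \<Rightarrow> nat \<Rightarrow> nat \<Rightarrow> real" where
  "Qstar H M h s a = mean_rew M h s a + measure_pmf.expectation (trans M h s a) (Vstar H M (h + 1))"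

definition gap :: "nat \<Rightarrow> mdp \<Rightarrow> nat \<Rightarrow> nat \<Rightarrow> nat \<Rightarrow> real" where
  "gap H M h s a = Vstar H M h s - Qstar H M h s a"

definition gap_set :: "nat \<Rightarrow> mdp \<Rightarrow> real set" where
  "gap_set H M = {gap H M h s a | h s a. h \<in> {1..H} \<and> gap H M h s a \<noteq> 0}"

definition min_gap :: "nat \<Rightarrow> mdp \<Rightarrow> real" where
  "min_gap H M = Inf (gap_set H M)"

definition SubOpt :: "nat \<Rightarrow> mdp \<Rightarrow> policy \<Rightarrow> real" where
  "SubOpt H M \<pi> = measure_pmf.expectation (init M) (\<lambda>s. Vstar H M 1 s - Vpi H M \<pi> 1 s)"

definition optimal_policy :: "nat \<Rightarrow> mdp \<Rightarrow> policy \<Rightarrow> bool" where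
  "optimal_policy H M \<pi> \<longleftrightarrow> SubOpt H M \<pi> = 0"

text \<open>sdist M \<pi> n is the state distribution at step n + 1.\<close>
fun sdist :: "mdp \<Rightarrow> policy \<Rightarrow> nat \<Rightarrow> nat pmf" where
  "sdist M \<pi> 0 = init M"
| "sdist M \<pi> (Suc n) =
     bind_pmf (sdist M \<pi> n) (\<lambda>s. bind_pmf (\<pi> (Suc n) s) (\<lambda>a. trans M (Suc n) s a))"

definition visit :: "mdp \<Rightarrow> policy \<Rightarrow> nat \<Rightarrow> nat \<Rightarrow> nat \<Rightarrow> real" where
  "visit M \<pi> h s a = pmf (sdist M \<pi> (h - 1)) s * pmf (\<pi> h s) a"

definition linear_mdp :: "nat \<Rightarrow> mdp \<Rightarrow> bool" where
  "linear_mdp H M \<longleftrightarrow>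
     (\<forall>h\<in>{1..H}. \<forall>s a. set_pmf (rew M h s a) \<subseteq> {0..1}) \<and>
     (\<exists>(d::nat) (\<phi>::nat \<Rightarrow> nat \<Rightarrow> nat \<Rightarrow> nat \<Rightarrow> real) (\<theta>::nat \<Rightarrow> nat \<Rightarrow> real)
        (\<nu>::nat \<Rightarrow> nat \<Rightarrow> nat \<Rightarrow> real).
        \<forall>h\<in>{1..H}. \<forall>s a.
          sqrt (\<Sum>i<d. (\<phi> h s a i)\<^sup>2) \<le> 1 \<and>
          mean_rew M h s a = (\<Sum>i<d. \<phi> h s a i * \<theta> h i) \<and>
          (\<forall>s'. pmf (trans M h s a) s' = (\<Sum>i<d. \<phi> h s a i * \<nu> h s' i)))"

fun traj :: "mdp \<Rightarrow> policy \<Rightarrow> nat \<Rightarrow> nat \<Rightarrow> nat \<Rightarrow> (nat \<times> nat \<times> real) list pmf" where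
  "traj M mu h 0 s = return_pmf []"
| "traj M mu h (Suc k) s =
     bind_pmf (mu h s) (\<lambda>a.
     bind_pmf (rew M h s a) (\<lambda>r.
     bind_pmf (trans M h s a) (\<lambda>s'.
     map_pmf (\<lambda>rest. (s, a, r) # rest) (traj M mu (Suc h) k s'))))"

definition episode :: "nat \<Rightarrow> mdp \<Rightarrow> policy \<Rightarrow> (nat \<times> nat \<times> real) list pmf" where
  "episode H M mu = bind_pmf (init M) (traj M mu 1 H)"

fun iid_pmf :: "'x pmf \<Rightarrow> nat \<Rightarrow> 'x list pmf" where
  "iid_pmf p 0 = return_pmf []"
| "iid_pmf p (Suc K) = bind_pmf p (\<lambda>x. map_pmf (Cons x) (iid_pmf p K))"

definition data_dist :: "nat \<Rightarrow> nat \<Rightarrow> mdp \<Rightarrow> policy \<Rightarrow> dataset pmf" where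
  "data_dist H K M mu = iid_pmf (episode H M mu) K"

end

theory Submission
  imports Defs
begin

definition BC :: "'a pmf \<Rightarrow> 'a pmf \<Rightarrow> ennreal" where
  "BC p q = (\<integral>\<^sup>+x. ennreal (sqrt (pmf p x * pmf q x)) \<partial>count_space UNIV)"

lemma swap_count:
  "(\<integral>\<^sup>+ x. \<integral>\<^sup>+ y. f x y \<partial>count_space UNIV \<partial>count_space UNIV) =
   (\<integral>\<^sup>+ y. \<integral>\<^sup>+ x. f x y \<partial>count_space UNIV \<partial>count_space UNIV)"
proof -
  have "(\<integral>\<^sup>+ x. \<integral>\<^sup>+ y. f x y \<partial>count_space UNIV \<partial>count_space UNIV) =
        integral\<^sup>N (count_space UNIV) (\<lambda>(x,y). f x y)"
    using nn_integral_fst_count_space[of "\<lambda>(x,y). f x y"] by simp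
  also have "\<dots> = (\<integral>\<^sup>+ y. \<integral>\<^sup>+ x. f x y \<partial>count_space UNIV \<partial>count_space UNIV)"
    using nn_integral_snd_count_space[of "\<lambda>(x,y). f x y"] by simp
  finally show ?thesis .
qed

lemma sq_le_imp_le_sqrt:
  fixes X :: ennreal
  assumes "X\<^sup>2 \<le> ennreal a" "0 \<le> a"
  shows "X \<le> ennreal (sqrt a)"
proof (cases X)
  case (real t)
  then have "ennreal (t\<^sup>2) \<le> ennreal a" using assms by (simp add: ennreal_power)
  then have "t\<^sup>2 \<le> a" using assms by (simp add: ennreal_le_iff)
  then have "t \<le> sqrt a" using real_le_rsqrt by blast
  then show ?thesis using real by (simp add: ennreal_leI)
next
  case top
  then have "top \<le> ennreal a" using assms(1) by (simp add: power2_eq_square)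
  then show ?thesis by (simp add: top_unique)
qed

lemma pmf_bind_nn:
  "ennreal (pmf (bind_pmf p f) y) = (\<integral>\<^sup>+x. ennreal (pmf p x * pmf (f x) y) \<partial>count_space UNIV)"
  by (simp add: ennreal_pmf_bind nn_integral_measure_pmf ennreal_mult)

lemma BC_bind:
  "BC (bind_pmf p f) (bind_pmf q g) \<ge>
     (\<integral>\<^sup>+x. ennreal (sqrt (pmf p x * pmf q x)) * BC (f x) (g x) \<partial>count_space UNIV)"
proof -
  have "(\<integral>\<^sup>+x. ennreal (sqrt (pmf p x * pmf q x)) * BC (f x) (g x) \<partial>count_space UNIV)
     = (\<integral>\<^sup>+x. \<integral>\<^sup>+y. ennreal (sqrt (pmf p x * pmf (f x) y)) * ennreal (sqrt (pmf q x * pmf (g x) y))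
          \<partial>count_space UNIV \<partial>count_space UNIV)"
    unfolding BC_def
    by (intro nn_integral_cong)
       (auto simp flip: nn_integral_cmult ennreal_mult simp: real_sqrt_mult mult_ac intro!: nn_integral_cong)
  also have "\<dots> = (\<integral>\<^sup>+y. \<integral>\<^sup>+x. ennreal (sqrt (pmf p x * pmf (f x) y)) * ennreal (sqrt (pmf q x * pmf (g x) y))
          \<partial>count_space UNIV \<partial>count_space UNIV)"
    by (rule swap_count)
  also have "\<dots> \<le> (\<integral>\<^sup>+y. ennreal (sqrt (pmf (bind_pmf p f) y * pmf (bind_pmf q g) y)) \<partial>count_space UNIV)"
  proof (intro nn_integral_mono)
    fix y
    have "(\<integral>\<^sup>+x. ennreal (sqrt (pmf p x * pmf (f x) y)) * ennreal (sqrt (pmf q x * pmf (g x) y)) \<partial>count_space UNIV)\<^sup>2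
       \<le> (\<integral>\<^sup>+x. ennreal (sqrt (pmf p x * pmf (f x) y)) ^ 2 \<partial>count_space UNIV) *
         (\<integral>\<^sup>+x. ennreal (sqrt (pmf q x * pmf (g x) y)) ^ 2 \<partial>count_space UNIV)"
      by (rule Cauchy_Schwarz_nn_integral) auto
    also have "\<dots> = ennreal (pmf (bind_pmf p f) y) * ennreal (pmf (bind_pmf q g) y)"
      by (simp add: pmf_bind_nn ennreal_power)
    also have "\<dots> = ennreal (pmf (bind_pmf p f) y * pmf (bind_pmf q g) y)"
      by (simp add: ennreal_mult)
    finally show "(\<integral>\<^sup>+x. ennreal (sqrt (pmf p x * pmf (f x) y)) * ennreal (sqrt (pmf q x * pmf (g x) y)) \<partial>count_space UNIV)
        \<le> ennreal (sqrt (pmf (bind_pmf p f) y * pmf (bind_pmf q g) y))"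
      by (rule sq_le_imp_le_sqrt) simp
  qed
  finally show ?thesis unfolding BC_def .
qed

lemma BC_same: "BC p p = 1"
  unfolding BC_def by (simp add: nn_integral_pmf_eq_1)

lemma BC_return_same: "BC (return_pmf x) (return_pmf x) = 1"
  by (rule BC_same)

lemma BC_bind_same:
  "BC (bind_pmf p f) (bind_pmf p g) \<ge> (\<integral>\<^sup>+x. BC (f x) (g x) \<partial>measure_pmf p)"
  using BC_bind[where p=p and q=p and f=f and g=g] by (simp add: nn_integral_measure_pmf)

lemma BC_bind_same2:
  "BC (bind_pmf p f) (bind_pmf q f) \<ge> BC p q"
proof -
  have "BC (bind_pmf p f) (bind_pmf q f) \<ge>
     (\<integral>\<^sup>+x. ennreal (sqrt (pmf p x * pmf q x)) * BC (f x) (f x) \<partial>count_space UNIV)"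
    by (rule BC_bind)
  then show ?thesis by (simp add: BC_same BC_def)
qed

lemma BC_map: "BC (map_pmf h p) (map_pmf h q) \<ge> BC p q"
  unfolding map_pmf_def by (rule BC_bind_same2)

lemma BC_iid: "BC (iid_pmf p K) (iid_pmf q K) \<ge> BC p q ^ K"
proof (induction K)
  case 0
  then show ?case by (simp add: BC_same)
next
  case (Suc K)
  have "BC p q ^ Suc K = (\<integral>\<^sup>+x. ennreal (sqrt (pmf p x * pmf q x)) * BC p q ^ K \<partial>count_space UNIV)"
    by (simp add: BC_def nn_integral_multc mult_ac)
  also have "\<dots> \<le> (\<integral>\<^sup>+x. ennreal (sqrt (pmf p x * pmf q x)) * BC (map_pmf (Cons x) (iid_pmf p K)) (map_pmf (Cons x) (iid_pmf q K)) \<partial>count_space UNIV)"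
    by (intro nn_integral_mono mult_left_mono order.trans[OF Suc.IH BC_map]) auto
  also have "\<dots> \<le> BC (iid_pmf p (Suc K)) (iid_pmf q (Suc K))"
    by (simp add: BC_bind)
  finally show ?case .
qed

lemma lecam:
  fixes L0 L1 :: "'a \<Rightarrow> real"
  assumes L0: "\<And>x. 0 \<le> L0 x" and L1: "\<And>x. 0 \<le> L1 x"
    and LG: "\<And>x. G \<le> L0 x + L1 x" and G: "0 \<le> G"
  shows "ennreal G * BC p0 p1 ^ 2 \<le> 2 * ((\<integral>\<^sup>+x. ennreal (L0 x) \<partial>p0) + (\<integral>\<^sup>+x. ennreal (L1 x) \<partial>p1))"
proof -
  define mn where "mn x = min (pmf p0 x) (pmf p1 x)" for x
  define mx where "mx x = max (pmf p0 x) (pmf p1 x)" for x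
  have mn0: "0 \<le> mn x" for x by (simp add: mn_def)
  have mx0: "0 \<le> mx x" for x by (simp add: mx_def le_max_iff_disj)
  have "BC p0 p1 = (\<integral>\<^sup>+x. ennreal (sqrt (mn x)) * ennreal (sqrt (mx x)) \<partial>count_space UNIV)"
    unfolding BC_def
    by (intro nn_integral_cong)
       (auto simp: mn_def mx_def min_def max_def real_sqrt_mult mult.commute simp flip: ennreal_mult)
  then have "BC p0 p1 ^ 2 \<le> (\<integral>\<^sup>+x. ennreal (sqrt (mn x)) ^ 2 \<partial>count_space UNIV) *
                              (\<integral>\<^sup>+x. ennreal (sqrt (mx x)) ^ 2 \<partial>count_space UNIV)"
    by (simp add: Cauchy_Schwarz_nn_integral)
  also have "\<dots> = (\<integral>\<^sup>+x. ennreal (mn x) \<partial>count_space UNIV) * (\<integral>\<^sup>+x. ennreal (mx x) \<partial>count_space UNIV)"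
    using mn0 mx0 by (simp add: ennreal_power)
  also have "(\<integral>\<^sup>+x. ennreal (mx x) \<partial>count_space UNIV) \<le>
      (\<integral>\<^sup>+x. ennreal (pmf p0 x) + ennreal (pmf p1 x) \<partial>count_space UNIV)"
    by (intro nn_integral_mono) (auto simp: mx_def max_def simp flip: ennreal_plus)
  also have "\<dots> = 2"
    by (simp add: nn_integral_add nn_integral_pmf_eq_1)
  finally have A: "BC p0 p1 ^ 2 \<le> (\<integral>\<^sup>+x. ennreal (mn x) \<partial>count_space UNIV) * 2"
    by (simp add: mult_left_mono)
  have "ennreal G * (\<integral>\<^sup>+x. ennreal (mn x) \<partial>count_space UNIV)
      = (\<integral>\<^sup>+x. ennreal (mn x * G) \<partial>count_space UNIV)"
    using G mn0 by (simp add: nn_integral_cmult ennreal_mult mult.commute flip: nn_integral_cmult)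
  also have "\<dots> \<le> (\<integral>\<^sup>+x. ennreal (pmf p0 x * L0 x) + ennreal (pmf p1 x * L1 x) \<partial>count_space UNIV)"
  proof (intro nn_integral_mono)
    fix x
    have "mn x * G \<le> mn x * (L0 x + L1 x)" using LG[of x] mn0[of x] by (simp add: mult_left_mono)
    also have "\<dots> \<le> pmf p0 x * L0 x + pmf p1 x * L1 x"
      using L0[of x] L1[of x] by (simp add: mn_def distrib_left add_mono mult_right_mono)
    finally show "ennreal (mn x * G) \<le> ennreal (pmf p0 x * L0 x) + ennreal (pmf p1 x * L1 x)"
      using L0[of x] L1[of x] by (simp flip: ennreal_plus add: ennreal_leI)
  qed
  also have "\<dots> = (\<integral>\<^sup>+x. ennreal (L0 x) \<partial>p0) + (\<integral>\<^sup>+x. ennreal (L1 x) \<partial>p1)"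
    using L0 L1 by (simp add: nn_integral_add nn_integral_measure_pmf ennreal_mult)
  finally have B: "ennreal G * (\<integral>\<^sup>+x. ennreal (mn x) \<partial>count_space UNIV) \<le>
     (\<integral>\<^sup>+x. ennreal (L0 x) \<partial>p0) + (\<integral>\<^sup>+x. ennreal (L1 x) \<partial>p1)" .
  have "ennreal G * BC p0 p1 ^ 2 \<le> ennreal G * ((\<integral>\<^sup>+x. ennreal (mn x) \<partial>count_space UNIV) * 2)"
    using A by (rule mult_left_mono) simp
  also have "\<dots> = 2 * (ennreal G * (\<integral>\<^sup>+x. ennreal (mn x) \<partial>count_space UNIV))"
    by (simp add: mult_ac)
  also have "\<dots> \<le> 2 * ((\<integral>\<^sup>+x. ennreal (L0 x) \<partial>p0) + (\<integral>\<^sup>+x. ennreal (L1 x) \<partial>p1))"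
    using B by (rule mult_left_mono) simp
  finally show ?thesis .
qed

definition Tst :: "real \<Rightarrow> nat pmf" where
  "Tst p = map_pmf (\<lambda>b. if b then 1 else 2) (bernoulli_pmf p)"
definition pj :: "real \<Rightarrow> nat \<Rightarrow> nat \<Rightarrow> real" where
  "pj e j a = (if a \<le> 1 then (if a = j then 1/2 + e else 1/2 - e) else 1/2)"
definition Rw :: "nat \<Rightarrow> nat \<Rightarrow> nat \<Rightarrow> real" where
  "Rw h s a = (if s = 1 then (if a = 0 then 1 else 0) else if s = 2 then (if a = 0 then 1/2 else 0)
     else if h = 1 \<and> s = 0 \<and> a \<le> 1 then 1 else 0)"
definition Tr :: "real \<Rightarrow> nat \<Rightarrow> nat \<Rightarrow> nat \<Rightarrow> nat \<Rightarrow> nat pmf" where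
  "Tr e j h s a = (if h = 1 \<and> s = 0 then Tst (pj e j a) else if s = 1 \<or> s = 2 then return_pmf s else return_pmf 0)"
definition MM :: "real \<Rightarrow> nat \<Rightarrow> mdp" where
  "MM e j = \<lparr>init = return_pmf 0, trans = Tr e j, rew = (\<lambda>h s a. return_pmf (Rw h s a))\<rparr>"
definition mu0 :: "real \<Rightarrow> nat pmf" where
  "mu0 k = bind_pmf (bernoulli_pmf (2/k)) (\<lambda>c. if c then map_pmf (\<lambda>b. if b then 0 else 1) (bernoulli_pmf (1/2)) else return_pmf 2)"
definition MU :: "real \<Rightarrow> policy" where
  "MU k h s = (if h = 1 \<and> s = 0 then mu0 k else return_pmf 0)"

lemma mean_rew_MM[simp]: "mean_rew (MM e j) h s a = Rw h s a"
  by (simp add: mean_rew_def MM_def)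

lemma trans_MM[simp]: "trans (MM e j) = Tr e j" by (simp add: MM_def)
lemma rew_MM[simp]: "rew (MM e j) h s a = return_pmf (Rw h s a)" by (simp add: MM_def)
lemma init_MM[simp]: "init (MM e j) = return_pmf 0" by (simp add: MM_def)

lemma pmf_Tst:
  assumes "0 \<le> p" "p \<le> 1"
  shows "pmf (Tst p) s = (if s = 1 then p else if s = 2 then 1 - p else 0)"
proof -
  have e: "pmf (Tst p) s = measure_pmf.prob (bernoulli_pmf p) ((\<lambda>b. if b then 1 else 2) -` {s})"
    by (simp add: Tst_def pmf_map)
  consider "s = 1" | "s = 2" | "s \<noteq> 1 \<and> s \<noteq> 2" by blast
  then show ?thesis
  proof cases
    case 1
    have "(\<lambda>b::bool. if b then (1::nat) else 2) -` {s} = {True}" using 1 by (intro set_eqI) (case_tac x; simp)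
    then show ?thesis using e 1 assms by (simp add: measure_pmf_single)
  next
    case 2
    have "(\<lambda>b::bool. if b then (1::nat) else 2) -` {s} = {False}" using 2 by (intro set_eqI) (case_tac x; simp)
    then show ?thesis using e 2 assms by (simp add: measure_pmf_single)
  next
    case 3
    have "(\<lambda>b::bool. if b then (1::nat) else 2) -` {s} = {}" using 3 by (intro set_eqI) (case_tac x; simp)
    then show ?thesis using e 3 assms by simp
  qed
qed

lemma set_Tst: "set_pmf (Tst p) \<subseteq> {1,2}"
  unfolding Tst_def set_map_pmf by (rule image_subsetI) simp

lemma integral_Tst:
  assumes "0 \<le> p" "p \<le> 1"
  shows "measure_pmf.expectation (Tst p) f = p * f 1 + (1 - p) * f 2"
  unfolding Tst_def integral_map_pmf using assms by (subst integral_bernoulli_pmf) auto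

lemma pj_bounds: "0 \<le> e \<Longrightarrow> e \<le> 1/2 \<Longrightarrow> 0 \<le> pj e j a \<and> pj e j a \<le> 1"
  by (simp add: pj_def)

lemma exp_ind:
  fixes p :: "nat pmf"
  shows "measure_pmf.expectation p (\<lambda>a. (if a = x then c else 0) + d) = c * pmf p x + d"
proof -
  have "(\<lambda>a. (if a = x then c else 0) + d) = (\<lambda>a. c * indicator {x} a + d)"
    by (auto simp: indicator_def)
  moreover have "integrable (measure_pmf p) (indicat_real {x})"
    by (rule measure_pmf.integrable_const_bound[where B=1]) auto
  moreover have "measure_pmf.expectation p (\<lambda>a. c * indicator {x} a + d) = c * pmf p x + d"
    using calculation(2) by (subst Bochner_Integration.integral_add) (auto simp: measure_pmf_single)
  ultimately show ?thesis by simp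
qed

definition rr :: "nat \<Rightarrow> real" where "rr s = (if s = 1 then 1 else 1/2)"

lemma Vpi_12:
  assumes "s = 1 \<or> s = 2"
  shows "Vpi_aux H (MM e j) \<pi> k s = (\<Sum>i<k. rr s * pmf (\<pi> (H - i) s) 0)"
proof (induction k)
  case 0
  then show ?case by simp
next
  case (Suc k)
  have "Vpi_aux H (MM e j) \<pi> (Suc k) s = measure_pmf.expectation (\<pi> (H - k) s)
      (\<lambda>a. (if a = 0 then rr s else 0) + Vpi_aux H (MM e j) \<pi> k s)"
    unfolding rr_def using assms by (cases "s = 1") (simp_all add: Tr_def Rw_def)
  also have "\<dots> = rr s * pmf (\<pi> (H - k) s) 0 + Vpi_aux H (MM e j) \<pi> k s"
    by (rule exp_ind)
  finally show ?case using Suc by simp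
qed

lemma Vpi_other:
  assumes "k \<le> H - 1"
  shows "s \<noteq> 1 \<Longrightarrow> s \<noteq> 2 \<Longrightarrow> Vpi_aux H (MM e j) \<pi> k s = 0"
  using assms
proof (induction k arbitrary: s)
  case 0
  then show ?case by simp
next
  case (Suc k)
  have "H - k \<noteq> 1" using Suc.prems by auto
  then have "Vpi_aux H (MM e j) \<pi> (Suc k) s = measure_pmf.expectation (\<pi> (H - k) s) (\<lambda>a. 0)"
    using Suc by (auto simp: Tr_def Rw_def intro!: Bochner_Integration.integral_cong)
  then show ?case by simp
qed

lemma Vstar_12:
  assumes "s = 1 \<or> s = 2"
  shows "Vstar_aux H (MM e j) k s = real k * rr s"
proof (induction k)
  case 0
  then show ?case by simp
next
  case (Suc k)
  have "Vstar_aux H (MM e j) (Suc k) s = (SUP a::nat. (if a = 0 then rr s else 0) + Vstar_aux H (MM e j) k s)"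
    unfolding rr_def using assms by (cases "s = 1") (simp_all add: Tr_def Rw_def)
  also have "\<dots> = (SUP a::nat. (if a = 0 then rr s else 0) + real k * rr s)"
    by (simp only: Suc.IH)
  also have "\<dots> = rr s + real k * rr s"
    by (rule cSup_eq_maximum) (auto simp: rr_def)
  finally show ?case by (simp add: algebra_simps)
qed

lemma Vstar_other:
  assumes "k \<le> H - 1"
  shows "s \<noteq> 1 \<Longrightarrow> s \<noteq> 2 \<Longrightarrow> Vstar_aux H (MM e j) k s = 0"
  using assms
proof (induction k arbitrary: s)
  case 0
  then show ?case by simp
next
  case (Suc k)
  have "H - k \<noteq> 1" using Suc.prems by auto
  then have "Vstar_aux H (MM e j) (Suc k) s = (SUP a::nat. 0)"
    using Suc by (auto simp: Tr_def Rw_def)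
  then show ?case by simp
qed

lemma Vstar_SUP_Q:
  assumes "h \<in> {1..H}"
  shows "Vstar H M h s = (SUP a. Qstar H M h s a)"
proof -
  have "H + 1 - h = Suc (H - h)" using assms by auto
  moreover have "H - (H - h) = h" using assms by auto
  moreover have "Vstar H M (Suc h) = Vstar_aux H M (H - h)" by (rule ext) (simp add: Vstar_def)
  ultimately show ?thesis by (simp add: Vstar_def Qstar_def)
qed

lemma Q_12:
  assumes "s = 1 \<or> s = 2" "h \<in> {1..H}"
  shows "Qstar H (MM e j) h s a = (if a = 0 then rr s else 0) + real (H - h) * rr s"
proof -
  have "Qstar H (MM e j) h s a = Rw h s a + Vstar_aux H (MM e j) (H - h) s"
    using assms by (auto simp: Qstar_def Vstar_def Tr_def)
  then show ?thesis using assms(1) Vstar_12[OF assms(1)] unfolding rr_def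
    by (cases "s = 1") (simp_all add: Rw_def)
qed

lemma Q_other:
  assumes "s \<noteq> 1" "s \<noteq> 2" "\<not> (h = 1 \<and> s = 0)" "h \<in> {1..H}"
  shows "Qstar H (MM e j) h s a = 0"
proof -
  have "Qstar H (MM e j) h s a = Rw h s a + Vstar_aux H (MM e j) (H - h) 0"
    using assms by (auto simp: Qstar_def Vstar_def Tr_def)
  moreover have "Vstar_aux H (MM e j) (H - h) 0 = 0"
    using assms by (intro Vstar_other) auto
  ultimately show ?thesis using assms by (simp add: Rw_def)
qed

lemma Q_10:
  assumes "2 \<le> H" "0 \<le> e" "e \<le> 1/2" "j \<le> 1"
  shows "Qstar H (MM e j) 1 0 a =
    (1 + 3 * real (H - 1) / 4 + e * real (H - 1) / 2) -
    (if a = j then 0 else if a \<le> 1 then e * real (H - 1) else 1 + e * real (H - 1) / 2)"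
proof -
  have pb: "0 \<le> pj e j a" "pj e j a \<le> 1" using pj_bounds[OF assms(2,3)] by auto
  have "Qstar H (MM e j) 1 0 a = Rw 1 0 a + (pj e j a * Vstar_aux H (MM e j) (H - 1) 1
        + (1 - pj e j a) * Vstar_aux H (MM e j) (H - 1) 2)"
    using pb by (simp add: Qstar_def Vstar_def Tr_def integral_Tst)
  also have "\<dots> = Rw 1 0 a + (pj e j a * real (H - 1) + (1 - pj e j a) * (real (H - 1) / 2))"
    by (simp add: Vstar_12 rr_def)
  finally show ?thesis using assms
    by (auto simp: Rw_def pj_def field_simps)
qed

definition GG :: "nat \<Rightarrow> real \<Rightarrow> real" where "GG H e = e * real (H - 1)"
definition WW :: "nat \<Rightarrow> real \<Rightarrow> real" where "WW H e = 1 + 3 * real (H - 1) / 4 + e * real (H - 1) / 2"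

lemma gap_MM:
  assumes "2 \<le> H" "0 \<le> e" "e \<le> 1/2" "j \<le> 1" "h \<in> {1..H}"
  shows "gap H (MM e j) h s a =
    (if h = 1 \<and> s = 0 then (if a = j then 0 else if a \<le> 1 then GG H e else 1 + GG H e / 2)
     else if s = 1 \<or> s = 2 then (if a = 0 then 0 else rr s) else 0)"
proof -
  have V: "Vstar H (MM e j) h s = (SUP a. Qstar H (MM e j) h s a)"
    by (rule Vstar_SUP_Q[OF assms(5)])
  consider "h = 1 \<and> s = 0" | "\<not> (h = 1 \<and> s = 0)" "s = 1 \<or> s = 2" | "\<not> (h = 1 \<and> s = 0)" "s \<noteq> 1" "s \<noteq> 2"
    by blast
  then show ?thesis
  proof cases
    case 1
    have "(SUP a. Qstar H (MM e j) 1 0 a) = WW H e"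
      unfolding Q_10[OF assms(1-4)] WW_def
      by (rule cSup_eq_maximum) (auto simp: image_iff assms intro!: exI[of _ j])
    moreover have "h = 1" "s = 0" using 1 by auto
    ultimately have "gap H (MM e j) h s a = WW H e - Qstar H (MM e j) 1 0 a"
      using V unfolding gap_def by simp
    then show ?thesis unfolding Q_10[OF assms(1-4)] WW_def GG_def using 1 by simp
  next
    case 2
    have "(SUP a. Qstar H (MM e j) h s a) = rr s + real (H - h) * rr s"
      unfolding Q_12[OF 2(2) assms(5)]
      by (rule cSup_eq_maximum) (auto simp: image_iff rr_def intro!: exI[of _ 0])
    then have "gap H (MM e j) h s a = (if a = 0 then 0 else rr s)"
      using V unfolding gap_def by (simp add: Q_12[OF 2(2) assms(5)])
    then show ?thesis using 2 by auto
  next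
    case 3
    then have "gap H (MM e j) h s a = 0" using V unfolding gap_def
      by (simp add: Q_other[OF 3(2,3,1) assms(5)])
    then show ?thesis using 3 by auto
  qed
qed

lemma Vstar_10:
  assumes "2 \<le> H" "0 \<le> e" "e \<le> 1/2" "j \<le> 1"
  shows "Vstar H (MM e j) 1 0 = WW H e"
proof -
  have "Vstar H (MM e j) 1 0 = (SUP a. Qstar H (MM e j) 1 0 a)"
    using assms by (intro Vstar_SUP_Q) auto
  also have "\<dots> = WW H e"
    unfolding Q_10[OF assms(1-4)] WW_def
    by (rule cSup_eq_maximum) (auto simp: image_iff assms intro!: exI[of _ j])
  finally show ?thesis .
qed

lemma min_gap_MM:
  assumes "2 \<le> H" "0 < e" "GG H e \<le> 1/2" "j \<le> 1"
  shows "gap_set H (MM e j) \<noteq> {}" "GG H e \<le> min_gap H (MM e j)" "0 < GG H e"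
proof -
  have H1: "1 \<le> real (H - 1)" using assms(1) by auto
  have GGpos: "0 < GG H e" unfolding GG_def using assms(2) H1 by simp
  have e2: "e \<le> 1/2" using assms(3) H1 assms(2) unfolding GG_def
    by (smt (verit) mult_le_cancel_left1)
  have nj: "1 - j \<noteq> j" "1 - j \<le> 1" using assms(4) by arith+
  have g: "gap H (MM e j) 1 0 (1 - j) = GG H e"
    using gap_MM[OF assms(1) _ e2 assms(4), of 1 0 "1 - j"] assms nj by simp
  have one: "(1::nat) \<in> {1..H}" using assms by auto
  have mem: "GG H e \<in> gap_set H (MM e j)"
    unfolding gap_set_def using one g GGpos by (metis (mono_tags, lifting) less_irrefl mem_Collect_eq)
  then show "gap_set H (MM e j) \<noteq> {}" by auto
  have lb: "GG H e \<le> x" if xin: "x \<in> gap_set H (MM e j)" for x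
  proof -
    obtain h s a where x: "x = gap H (MM e j) h s a" "h \<in> {1..H}" "x \<noteq> 0"
      using xin unfolding gap_set_def by blast
    then show ?thesis using gap_MM[OF assms(1) _ e2 assms(4) x(2), of s a] assms GGpos
      by (auto simp: rr_def split: if_splits)
  qed
  show "GG H e \<le> min_gap H (MM e j)"
    unfolding min_gap_def using mem lb by (intro cInf_greatest) auto
  show "0 < GG H e" by (rule GGpos)
qed

definition xv :: "nat \<Rightarrow> policy \<Rightarrow> real" where
  "xv H \<pi> = (\<Sum>i<H-1. pmf (\<pi> (H - i) 1) 0)"
definition yv :: "nat \<Rightarrow> policy \<Rightarrow> real" where
  "yv H \<pi> = (\<Sum>i<H-1. 1/2 * pmf (\<pi> (H - i) 2) 0)"

lemma xv_bounds: "0 \<le> xv H \<pi>" "xv H \<pi> \<le> real (H - 1)"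
  unfolding xv_def
  by (auto intro!: sum_nonneg order.trans[OF sum_bounded_above[where K=1]] pmf_le_1)

lemma yv_bounds: "0 \<le> yv H \<pi>" "yv H \<pi> \<le> real (H - 1) / 2"
proof -
  have e: "yv H \<pi> = 1/2 * (\<Sum>i<H-1. pmf (\<pi> (H - i) 2) 0)"
    unfolding yv_def by (simp add: sum_distrib_left)
  have "(\<Sum>i<H-1. pmf (\<pi> (H - i) 2) 0) \<le> real (H - 1)"
    by (auto intro!: order.trans[OF sum_bounded_above[where K=1]] pmf_le_1)
  moreover have "0 \<le> (\<Sum>i<H-1. pmf (\<pi> (H - i) 2) 0)" by (auto intro!: sum_nonneg)
  ultimately show "0 \<le> yv H \<pi>" "yv H \<pi> \<le> real (H - 1) / 2" unfolding e by auto
qed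

definition FF :: "nat \<Rightarrow> real \<Rightarrow> nat \<Rightarrow> policy \<Rightarrow> nat \<Rightarrow> real" where
  "FF H e j \<pi> a = (if a \<le> 1 then 1 else 0) + pj e j a * xv H \<pi> + (1 - pj e j a) * yv H \<pi>"

lemma Vpi_10:
  assumes "2 \<le> H" "0 \<le> e" "e \<le> 1/2" "j \<le> 1"
  shows "Vpi H (MM e j) \<pi> 1 0 = measure_pmf.expectation (\<pi> 1 0) (FF H e j \<pi>)"
proof -
  have HS: "H + 1 - 1 = Suc (H - 1)" "H - (H - 1) = 1" using assms by auto
  have x: "Vpi_aux H (MM e j) \<pi> (H - Suc 0) (Suc 0) = xv H \<pi>"
    by (simp add: Vpi_12 xv_def rr_def)
  have y: "Vpi_aux H (MM e j) \<pi> (H - Suc 0) 2 = yv H \<pi>"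
    by (simp add: Vpi_12 yv_def rr_def)
  show ?thesis
    unfolding Vpi_def HS Vpi_aux.simps
    using pj_bounds[OF assms(2,3)]
    by (intro Bochner_Integration.integral_cong)
       (simp_all add: Tr_def integral_Tst x y FF_def Rw_def)
qed

lemma FF_nonneg:
  assumes "0 \<le> e" "e \<le> 1/2"
  shows "0 \<le> FF H e j \<pi> a"
  using pj_bounds[OF assms, of j a] xv_bounds yv_bounds unfolding FF_def
  by (auto intro!: add_nonneg_nonneg mult_nonneg_nonneg)

lemma FF_le:
  assumes "0 \<le> e" "e \<le> 1/2"
  shows "FF H e j \<pi> a \<le> 1 + xv H \<pi> + yv H \<pi>"
proof -
  have p: "0 \<le> pj e j a" "pj e j a \<le> 1" using pj_bounds[OF assms] by auto
  have "pj e j a * xv H \<pi> \<le> xv H \<pi>" using p xv_bounds by (simp add: mult_left_le_one_le)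
  moreover have "(1 - pj e j a) * yv H \<pi> \<le> yv H \<pi>" using p yv_bounds by (simp add: mult_left_le_one_le)
  ultimately show ?thesis unfolding FF_def by auto
qed

lemma integrable_FF:
  assumes "0 \<le> e" "e \<le> 1/2"
  shows "integrable (measure_pmf p) (FF H e j \<pi>)"
  by (rule measure_pmf.integrable_const_bound[where B="1 + xv H \<pi> + yv H \<pi>"])
     (use FF_nonneg[OF assms] FF_le[OF assms] in auto)

definition AA :: "nat \<Rightarrow> real \<Rightarrow> policy \<Rightarrow> real" where
  "AA H e \<pi> = 1 + (1/2 + e) * xv H \<pi> + (1/2 - e) * yv H \<pi>"

lemma WW_AA:
  "WW H e - AA H e \<pi> = (1/2 + e) * (real (H - 1) - xv H \<pi>) + (1/2 - e) * (real (H - 1) / 2 - yv H \<pi>)"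
  unfolding WW_def AA_def by (simp add: field_simps)

lemma WW_AA_nonneg: "0 \<le> e \<Longrightarrow> e \<le> 1/2 \<Longrightarrow> 0 \<le> WW H e - AA H e \<pi>"
  unfolding WW_AA using xv_bounds[of H \<pi>] yv_bounds[of H \<pi>]
  by (intro add_nonneg_nonneg mult_nonneg_nonneg) auto

lemma SubOpt_eq:
  assumes "2 \<le> H" "0 \<le> e" "e \<le> 1/2" "j \<le> 1"
  shows "SubOpt H (MM e j) \<pi> = WW H e - measure_pmf.expectation (\<pi> 1 0) (FF H e j \<pi>)"
  unfolding SubOpt_def using Vstar_10[OF assms] Vpi_10[OF assms] by simp

lemma FF_bound:
  assumes "2 \<le> H" "0 \<le> e" "GG H e \<le> 1/2" "j \<le> 1"
  shows "FF H e j \<pi> a \<le> (if a = j then AA H e \<pi> - WW H e + GG H e else 0) + (WW H e - GG H e)"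
proof -
  have H1: "1 \<le> real (H - 1)" using assms(1) by auto
  have e2: "e \<le> 1/2" using assms(3) H1 assms(2) unfolding GG_def
    by (smt (verit) mult_le_cancel_left1)
  define x where "x = xv H \<pi>"
  define y where "y = yv H \<pi>"
  define n where "n = real (H - 1)"
  have xb: "0 \<le> x" "x \<le> n" using xv_bounds unfolding x_def n_def by auto
  have yb: "0 \<le> y" "y \<le> n / 2" using yv_bounds unfolding y_def n_def by auto
  have G: "GG H e = e * n" unfolding GG_def n_def by simp
  have W: "WW H e = 1 + 3 * n / 4 + e * n / 2" unfolding WW_def n_def by simp
  consider "a = j" | "a \<noteq> j" "a \<le> 1" | "\<not> a \<le> 1" by blast
  then show ?thesis
  proof cases
    case 1
    then show ?thesis using assms by (simp add: FF_def AA_def pj_def x_def y_def)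
  next
    case 2
    have "FF H e j \<pi> a = 1 + (1/2 - e) * x + (1/2 + e) * y"
      using 2 by (simp add: FF_def pj_def x_def y_def)
    also have "(1/2 - e) * x \<le> (1/2 - e) * n" using xb e2 by (intro mult_left_mono) auto
    also have "(1/2 + e) * y \<le> (1/2 + e) * (n / 2)" using yb assms(2) by (intro mult_left_mono) auto
    finally show ?thesis using 2 G W by (simp add: algebra_simps)
  next
    case 3
    have "FF H e j \<pi> a = x / 2 + y / 2"
      using 3 by (simp add: FF_def pj_def x_def y_def algebra_simps)
    also have "\<dots> \<le> WW H e - GG H e" using xb yb G W assms(3) by simp
    finally show ?thesis using 3 assms(4) by auto
  qed
qed

lemma SubOpt_lb:
  assumes "2 \<le> H" "0 < e" "GG H e \<le> 1/2" "j \<le> 1"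
  shows "SubOpt H (MM e j) \<pi> \<ge> GG H e * (1 - pmf (\<pi> 1 0) j) + (WW H e - AA H e \<pi>) * pmf (\<pi> 1 0) j"
    and "0 \<le> SubOpt H (MM e j) \<pi>" and "SubOpt H (MM e j) \<pi> \<le> WW H e"
proof -
  have H1: "1 \<le> real (H - 1)" using assms(1) by auto
  have e2: "e \<le> 1/2" using assms(3) H1 assms(2) unfolding GG_def
    by (smt (verit) mult_le_cancel_left1)
  have e0: "0 \<le> e" using assms by simp
  have "measure_pmf.expectation (\<pi> 1 0) (FF H e j \<pi>) \<le>
     measure_pmf.expectation (\<pi> 1 0) (\<lambda>a. (if a = j then AA H e \<pi> - WW H e + GG H e else 0) + (WW H e - GG H e))"
    by (rule integral_mono[OF integrable_FF[OF e0 e2] _ FF_bound[OF assms(1) e0 assms(3,4)]],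
        rule measure_pmf.integrable_const_bound[where B="\<bar>AA H e \<pi> - WW H e + GG H e\<bar> + \<bar>WW H e - GG H e\<bar>"]) auto
  also have "\<dots> = (AA H e \<pi> - WW H e + GG H e) * pmf (\<pi> 1 0) j + (WW H e - GG H e)"
    by (rule exp_ind)
  finally have E: "measure_pmf.expectation (\<pi> 1 0) (FF H e j \<pi>) \<le> \<dots>" .
  show lb: "SubOpt H (MM e j) \<pi> \<ge> GG H e * (1 - pmf (\<pi> 1 0) j) + (WW H e - AA H e \<pi>) * pmf (\<pi> 1 0) j"
    using E SubOpt_eq[OF assms(1) e0 e2 assms(4), of \<pi>] by (simp add: algebra_simps)
  have "0 \<le> GG H e * (1 - pmf (\<pi> 1 0) j) + (WW H e - AA H e \<pi>) * pmf (\<pi> 1 0) j"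
    using WW_AA_nonneg[OF e0 e2, of H \<pi>] min_gap_MM(3)[OF assms] pmf_le_1[of "\<pi> 1 0" j]
    by (intro add_nonneg_nonneg mult_nonneg_nonneg) auto
  then show "0 \<le> SubOpt H (MM e j) \<pi>" using lb by linarith
  have "0 \<le> measure_pmf.expectation (\<pi> 1 0) (FF H e j \<pi>)"
    by (rule Bochner_Integration.integral_nonneg) (simp add: FF_nonneg[OF e0 e2])
  then show "SubOpt H (MM e j) \<pi> \<le> WW H e"
    using SubOpt_eq[OF assms(1) e0 e2 assms(4), of \<pi>] by simp
qed

lemma pmf_one_return:
  assumes "pmf p x = 1"
  shows "p = return_pmf x"
proof -
  have "set_pmf p \<subseteq> {x}"
  proof
    fix y assume y: "y \<in> set_pmf p"
    show "y \<in> {x}"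
    proof (rule ccontr)
      assume "y \<notin> {x}"
      then have "measure (measure_pmf p) {x, y} = pmf p x + pmf p y"
        by (simp add: measure_measure_pmf_finite)
      moreover have "pmf p y > 0" using y by (simp add: pmf_positive)
      moreover have "measure (measure_pmf p) {x, y} \<le> 1" by simp
      ultimately show False using assms by simp
    qed
  qed
  then show ?thesis by (simp add: set_pmf_subset_singleton)
qed

lemma sum_eq_card_imp:
  fixes f :: "nat \<Rightarrow> real"
  assumes "\<And>i. i < n \<Longrightarrow> f i \<le> 1" "(\<Sum>i<n. f i) = real n"
  shows "i < n \<Longrightarrow> f i = 1"
proof -
  have "(\<Sum>i<n. 1 - f i) = 0" using assms(2) by (simp add: sum_subtractf)
  moreover have "\<forall>i\<in>{..<n}. 0 \<le> 1 - f i" using assms(1) by auto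
  ultimately have "\<forall>i\<in>{..<n}. 1 - f i = 0" using sum_nonneg_eq_0_iff[of "{..<n}" "\<lambda>i. 1 - f i"] by auto
  then show "i < n \<Longrightarrow> f i = 1" by auto
qed

lemma opt_char:
  assumes "2 \<le> H" "0 < e" "GG H e \<le> 1/4" "j \<le> 1" "SubOpt H (MM e j) \<pi> = 0"
  shows "\<pi> 1 0 = return_pmf j" and "\<And>h. h \<in> {2..H} \<Longrightarrow> \<pi> h 1 = return_pmf 0 \<and> \<pi> h 2 = return_pmf 0"
proof -
  have H1: "1 \<le> real (H - 1)" using assms(1) by auto
  have e4: "e \<le> 1/4" using assms(3) H1 assms(2) unfolding GG_def
    by (smt (verit) mult_le_cancel_left1)
  have G: "GG H e \<le> 1/2" using assms(3) by simp
  have Gp: "0 < GG H e" using min_gap_MM(3)[OF assms(1,2) G assms(4)] .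
  define p where "p = pmf (\<pi> 1 0) j"
  have p1: "p \<le> 1" "0 \<le> p" unfolding p_def by (auto simp: pmf_le_1)
  have lb: "GG H e * (1 - p) + (WW H e - AA H e \<pi>) * p \<le> 0"
    using SubOpt_lb(1)[OF assms(1,2) G assms(4), of \<pi>] assms(5) unfolding p_def by simp
  have nn: "0 \<le> WW H e - AA H e \<pi>" using WW_AA_nonneg[of e H \<pi>] e4 assms(2) by simp
  have "0 \<le> GG H e * (1 - p)" using Gp p1 by simp
  moreover have "0 \<le> (WW H e - AA H e \<pi>) * p" using nn p1 by simp
  ultimately have z1: "GG H e * (1 - p) = 0" and z2: "(WW H e - AA H e \<pi>) * p = 0" using lb by linarith+
  from z1 Gp have pe: "p = 1" by simp
  then show "\<pi> 1 0 = return_pmf j" unfolding p_def by (rule pmf_one_return)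
  from z2 pe have W0: "WW H e - AA H e \<pi> = 0" by simp
  have a1: "0 \<le> (1/2 + e) * (real (H - 1) - xv H \<pi>)" using xv_bounds[of H \<pi>] assms(2) by simp
  have a2: "0 \<le> (1/2 - e) * (real (H - 1) / 2 - yv H \<pi>)" using yv_bounds[of H \<pi>] e4 by simp
  have "(1/2 + e) * (real (H - 1) - xv H \<pi>) = 0" using W0 a1 a2 unfolding WW_AA by linarith
  then have xe: "xv H \<pi> = real (H - 1)" using assms(2) by simp
  have "(1/2 - e) * (real (H - 1) / 2 - yv H \<pi>) = 0" using W0 a1 a2 unfolding WW_AA by linarith
  then have ye: "yv H \<pi> = real (H - 1) / 2" using e4 by simp
  have ye': "(\<Sum>i<H-1. pmf (\<pi> (H - i) 2) 0) = real (H - 1)"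
  proof -
    have "yv H \<pi> = 1/2 * (\<Sum>i<H-1. pmf (\<pi> (H - i) 2) 0)"
      unfolding yv_def by (simp add: sum_distrib_left)
    then show ?thesis using ye by simp
  qed
  fix h assume h: "h \<in> {2..H}"
  then have i: "H - h < H - 1" "H - (H - h) = h" by auto
  have "pmf (\<pi> (H - (H - h)) 1) 0 = 1"
    using sum_eq_card_imp[of "H - 1" "\<lambda>i. pmf (\<pi> (H - i) 1) 0", OF pmf_le_1 _ i(1)] xe
    unfolding xv_def by simp
  moreover have "pmf (\<pi> (H - (H - h)) 2) 0 = 1"
    using sum_eq_card_imp[of "H - 1" "\<lambda>i. pmf (\<pi> (H - i) 2) 0", OF pmf_le_1 ye' i(1)] by simp
  ultimately show "\<pi> h 1 = return_pmf 0 \<and> \<pi> h 2 = return_pmf 0"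
    using i(2) by (simp add: pmf_one_return)
qed

definition pistar :: "nat \<Rightarrow> policy" where
  "pistar j h s = (if h = 1 \<and> s = 0 then return_pmf j else return_pmf 0)"

lemma pistar_opt:
  assumes "2 \<le> H" "0 \<le> e" "e \<le> 1/2" "j \<le> 1"
  shows "SubOpt H (MM e j) (pistar j) = 0"
proof -
  have x: "xv H (pistar j) = real (H - 1)" unfolding xv_def pistar_def by simp
  have y: "yv H (pistar j) = real (H - 1) / 2" unfolding yv_def pistar_def by simp
  have "FF H e j (pistar j) j = AA H e (pistar j)"
    using assms by (simp add: FF_def AA_def pj_def)
  moreover have "WW H e - AA H e (pistar j) = 0" unfolding WW_AA x y by simp
  ultimately show ?thesis unfolding SubOpt_eq[OF assms] by (simp add: pistar_def)
qed

lemma pmf_mu0: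
  assumes "2 \<le> k"
  shows "pmf (mu0 k) a = (if a = 0 then 1/k else if a = 1 then 1/k else if a = 2 then 1 - 2/k else 0)"
proof -
  have k: "0 \<le> 2/k" "2/k \<le> 1" using assms by auto
  have m0: "pmf (map_pmf (\<lambda>b. if b then 0 else 1) (bernoulli_pmf (1/2))) (0::nat) = 1/2"
    using pmf_map_inj'[of "\<lambda>b. if b then (0::nat) else 1" "bernoulli_pmf (1/2)" True]
    by (simp add: inj_def)
  have m1: "pmf (map_pmf (\<lambda>b. if b then 0 else 1) (bernoulli_pmf (1/2))) (1::nat) = 1/2"
    using pmf_map_inj'[of "\<lambda>b. if b then (0::nat) else 1" "bernoulli_pmf (1/2)" False]
    by (simp add: inj_def)
  have m2: "a \<noteq> 0 \<Longrightarrow> a \<noteq> 1 \<Longrightarrow> pmf (map_pmf (\<lambda>b. if b then 0 else 1) (bernoulli_pmf (1/2))) a = 0"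
    by (auto simp: pmf_eq_0_set_pmf image_iff)
  have "pmf (mu0 k) a = 2/k * pmf (map_pmf (\<lambda>b. if b then 0 else 1) (bernoulli_pmf (1/2))) a
       + (1 - 2/k) * pmf (return_pmf 2) a"
    unfolding mu0_def pmf_bind using k by simp
  then show ?thesis using m0 m1 m2 by (auto simp: indicator_def)
qed

lemma set_mu0: "set_pmf (mu0 k) \<subseteq> {0,1,2}"
  unfolding mu0_def by (auto split: if_splits)

lemma sdist1: "sdist (MM e j) \<pi> 1 = bind_pmf (\<pi> 1 0) (\<lambda>a. Tst (pj e j a))"
proof -
  have "Tr e j (Suc 0) 0 = (\<lambda>a. Tst (pj e j a))" by (rule ext) (simp add: Tr_def)
  then show ?thesis by (simp add: bind_return_pmf)
qed

lemma set_sdist1: "set_pmf (sdist (MM e j) \<pi> 1) \<subseteq> {1,2}"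
  unfolding sdist1 using set_Tst by fastforce

lemma sdist_Suc: "sdist (MM e j) \<pi> (Suc m) = sdist (MM e j) \<pi> 1"
proof (induction m)
  case 0
  then show ?case by simp
next
  case (Suc m)
  have "sdist (MM e j) \<pi> (Suc (Suc m)) =
     bind_pmf (sdist (MM e j) \<pi> (Suc m)) (\<lambda>s. bind_pmf (\<pi> (Suc (Suc m)) s) (\<lambda>a. Tr e j (Suc (Suc m)) s a))"
    by simp
  also have "\<dots> = bind_pmf (sdist (MM e j) \<pi> 1) return_pmf"
    unfolding Suc.IH
  proof (rule bind_pmf_cong[OF refl])
    fix s assume "s \<in> set_pmf (sdist (MM e j) \<pi> 1)"
    then have "s = 1 \<or> s = 2" using set_sdist1 by blast
    then show "bind_pmf (\<pi> (Suc (Suc m)) s) (\<lambda>a. Tr e j (Suc (Suc m)) s a) = return_pmf s"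
      by (auto simp: Tr_def bind_pmf_const)
  qed
  also have "\<dots> = sdist (MM e j) \<pi> 1" by (simp add: bind_return_pmf')
  finally show ?case .
qed

lemma pmf_sdist_mu:
  assumes "2 \<le> k" "0 \<le> e" "e \<le> 1/2" "j \<le> 1" "s = 1 \<or> s = 2"
  shows "pmf (sdist (MM e j) (MU k) 1) s = 1/2"
proof -
  have "pmf (sdist (MM e j) (MU k) 1) s = measure_pmf.expectation (mu0 k) (\<lambda>a. pmf (Tst (pj e j a)) s)"
    unfolding sdist1 pmf_bind by (simp add: MU_def)
  also have "\<dots> = (\<Sum>a\<in>{0,1,2}. pmf (mu0 k) a *\<^sub>R pmf (Tst (pj e j a)) s)"
    by (rule integral_measure_pmf[of "{0,1,2}"]) (use set_mu0 in auto)
  also have "\<dots> = 1/2"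
    using assms pj_bounds[OF assms(2,3), of j]
    by (auto simp: pmf_mu0 pmf_Tst pj_def field_simps)
  finally show ?thesis .
qed

lemma coverage:
  assumes "2 \<le> H" "0 < e" "GG H e \<le> 1/4" "j \<le> 1" "SubOpt H (MM e j) \<pi> = 0"
    and kap: "\<forall>h\<ge>1. \<kappa> h \<ge> (2::real)"
    and hH: "h \<in> {1..H}"
  shows "visit (MM e j) \<pi> h s a \<le> \<kappa> h * visit (MM e j) (MU (\<kappa> 1)) h s a"
proof -
  have H1: "1 \<le> real (H - 1)" using assms(1) by auto
  have e4: "e \<le> 1/4" using assms(3) H1 assms(2) unfolding GG_def
    by (smt (verit) mult_le_cancel_left1)
  have k2: "2 \<le> \<kappa> 1" "2 \<le> \<kappa> h" using kap hH by auto
  have pi1: "\<pi> 1 0 = return_pmf j" by (rule opt_char(1)[OF assms(1-5)])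
  have nn: "0 \<le> \<kappa> h * visit (MM e j) (MU (\<kappa> 1)) h s a"
    using k2 by (simp add: visit_def)
  show ?thesis
  proof (cases "h = 1")
    case True
    show ?thesis
    proof (cases "s = 0 \<and> a = j")
      case True
      have "pmf (mu0 (\<kappa> 1)) j = 1 / \<kappa> 1" using assms(4) pmf_mu0[OF k2(1), of j] by (cases j) auto
      then show ?thesis using \<open>h = 1\<close> k2 pi1 True
        by (auto simp: visit_def MU_def)
    next
      case False
      then have "visit (MM e j) \<pi> h s a = 0" using \<open>h = 1\<close> pi1
        by (cases "s = 0") (auto simp: visit_def)
      then show ?thesis using nn by simp
    qed
  next
    case False
    then obtain m where m: "h - 1 = Suc m" using hH by (cases "h - 1") auto
    have sd: "sdist (MM e j) \<pi> (h - 1) = Tst (1/2 + e)"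
      unfolding m sdist_Suc sdist1 pi1 using assms(4) by (simp add: bind_return_pmf pj_def)
    have sdm: "sdist (MM e j) (MU (\<kappa> 1)) (h - 1) = sdist (MM e j) (MU (\<kappa> 1)) 1"
      unfolding m sdist_Suc ..
    show ?thesis
    proof (cases "s = 1 \<or> s = 2")
      case True
      have h2: "h \<in> {2..H}" using hH False by auto
      have pis: "\<pi> h s = return_pmf 0" using opt_char(2)[OF assms(1-5) h2] True by auto
      have mus: "MU (\<kappa> 1) h s = return_pmf 0" using False by (simp add: MU_def)
      have "pmf (Tst (1/2 + e)) s \<le> 1" by (rule pmf_le_1)
      moreover have P: "pmf (sdist (MM e j) (MU (\<kappa> 1)) 1) s = 1/2"
        by (rule pmf_sdist_mu) (use k2 assms(2,4) e4 True in auto)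
      moreover have v1: "visit (MM e j) \<pi> h s a = pmf (Tst (1/2 + e)) s * pmf (return_pmf 0) a"
        by (simp only: visit_def sd pis)
      moreover have v2: "visit (MM e j) (MU (\<kappa> 1)) h s a = 1/2 * pmf (return_pmf 0) a"
        by (simp only: visit_def sdm mus P)
      show ?thesis
      proof (cases "a = 0")
        case True
        then have "visit (MM e j) (MU (\<kappa> 1)) h s a = 1/2" using v2 by simp
        moreover have "visit (MM e j) \<pi> h s a \<le> 1" using v1 True pmf_le_1 by simp
        ultimately show ?thesis using k2 by (simp only:)
      next
        case False
        then show ?thesis using v1 nn by simp
      qed
    next
      case False
      have "pmf (Tst (1/2 + e)) s = 0" using False e4 assms(2) by (simp add: pmf_Tst)
      then have "visit (MM e j) \<pi> h s a = 0" by (simp only: visit_def sd)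
      then show ?thesis using nn by simp
    qed
  qed
qed

lemma sum4: "(\<Sum>i<4. f i) = f 0 + f 1 + f 2 + (f 3 :: real)" for f :: "nat \<Rightarrow> real"
  by (simp add: eval_nat_numeral)

lemma set_Tr: "set_pmf (Tr e j h s a) \<subseteq> {0,1,2}"
  unfolding Tr_def using set_Tst by auto

lemma linear_MM:
  assumes "0 \<le> e" "e \<le> 1/2"
  shows "linear_mdp H (MM e j)"
proof -
  have R: "0 \<le> Rw h s a \<and> Rw h s a \<le> 1" for h s a by (simp add: Rw_def)
  define \<phi> where "\<phi> h s a i = (if i < 3 then pmf (Tr e j h s a) i else Rw h s a) / 2" for h s a i
  define \<theta> where "\<theta> (h::nat) (i::nat) = (if i = 3 then 2 else (0::real))" for h i
  define \<nu> where "\<nu> (h::nat) (s'::nat) (i::nat) = (if i < 3 \<and> s' = i then 2 else (0::real))" for h s' i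
  have "sqrt (\<Sum>i<4. (\<phi> h s a i)\<^sup>2) \<le> 1 \<and> mean_rew (MM e j) h s a = (\<Sum>i<4. \<phi> h s a i * \<theta> h i) \<and>
        (\<forall>s'. pmf (trans (MM e j) h s a) s' = (\<Sum>i<4. \<phi> h s a i * \<nu> h s' i))" for h s a
  proof (intro conjI allI)
    let ?p = "pmf (Tr e j h s a)"
    have sq: "?p i ^ 2 \<le> ?p i" for i using pmf_le_1[of "Tr e j h s a" i]
      by (simp add: power2_eq_square mult_left_le_one_le)
    have "measure (measure_pmf (Tr e j h s a)) {0,1,2} = ?p 0 + ?p 1 + ?p 2"
      by (simp add: measure_measure_pmf_finite)
    then have s3: "?p 0 + ?p 1 + ?p 2 \<le> 1" by (metis measure_pmf.prob_le_1)
    have "(\<Sum>i<4. (\<phi> h s a i)\<^sup>2) = (?p 0 ^ 2 + ?p 1 ^ 2 + ?p 2 ^ 2 + Rw h s a ^ 2) / 4"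
      unfolding sum4 \<phi>_def by (simp add: power_divide)
    also have "\<dots> \<le> 1"
    proof -
      have "Rw h s a * Rw h s a \<le> 1" using R[of h s a] by (simp add: mult_le_one)
      then show ?thesis using sq[of 0] sq[of 1] sq[of 2] s3 by (simp add: power2_eq_square)
    qed
    finally show "sqrt (\<Sum>i<4. (\<phi> h s a i)\<^sup>2) \<le> 1" by simp
    show "mean_rew (MM e j) h s a = (\<Sum>i<4. \<phi> h s a i * \<theta> h i)"
      unfolding sum4 \<phi>_def \<theta>_def by simp
    fix s'
    show "pmf (trans (MM e j) h s a) s' = (\<Sum>i<4. \<phi> h s a i * \<nu> h s' i)"
    proof (cases "s' < 3")
      case True
      then have "s' = 0 \<or> s' = 1 \<or> s' = 2" by auto
      then show ?thesis unfolding sum4 \<phi>_def \<nu>_def by auto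
    next
      case False
      then have "s' \<notin> set_pmf (Tr e j h s a)" using set_Tr by fastforce
      then show ?thesis using False unfolding sum4 \<phi>_def \<nu>_def by (simp add: set_pmf_iff)
    qed
  qed
  then show ?thesis unfolding linear_mdp_def using R
    by (auto intro!: exI[of _ 4] exI[of _ \<phi>] exI[of _ \<theta>] exI[of _ \<nu>])
qed

lemma traj_indep: "2 \<le> h \<Longrightarrow> traj (MM e j) mu h k s = traj (MM e 0) mu h k s"
proof (induction k arbitrary: h s)
  case 0
  then show ?case by simp
next
  case (Suc k)
  have "Tr e j h s a = Tr e 0 h s a" for a using Suc.prems by (simp add: Tr_def)
  then show ?case using Suc by simp
qed

lemma episode_eq:
  assumes "H = Suc n"
  shows "episode H (MM e j) (MU k) = bind_pmf (mu0 k) (\<lambda>a. bind_pmf (Tst (pj e j a))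
           (\<lambda>s'. map_pmf (Cons (0, a, Rw 1 0 a)) (traj (MM e 0) (MU k) 2 n s')))"
proof -
  have "Tr e j (Suc 0) 0 = (\<lambda>a. Tst (pj e j a))" by (rule ext) (simp add: Tr_def)
  moreover have "traj (MM e j) (MU k) 2 n s' = traj (MM e 0) (MU k) 2 n s'" for s'
    by (rule traj_indep) simp
  ultimately show ?thesis unfolding episode_def assms
    by (simp add: bind_return_pmf MU_def numeral_2_eq_2)
qed

lemma BC_lb2:
  fixes f :: "nat \<Rightarrow> ennreal"
  shows "(\<integral>\<^sup>+x. f x \<partial>count_space UNIV) \<ge> f 1 + f 2"
proof -
  have "(\<integral>\<^sup>+x. f x * indicator {1,2} x \<partial>count_space UNIV) = (\<Sum>x\<in>{1,2}. f x * emeasure (count_space UNIV) {x})"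
    by (rule nn_integral_indicator_finite) auto
  also have "\<dots> = f 1 + f 2" by simp
  finally have "(\<integral>\<^sup>+x. f x * indicator {1,2} x \<partial>count_space UNIV) = f 1 + f 2" .
  moreover have "(\<integral>\<^sup>+x. f x * indicator {1,2} x \<partial>count_space UNIV) \<le> (\<integral>\<^sup>+x. f x \<partial>count_space UNIV)"
    by (intro nn_integral_mono) (auto split: split_indicator)
  ultimately show ?thesis by simp
qed

lemma sqrt_lb: assumes "0 \<le> e" "e \<le> 1/2" shows "1/2 - 2 * e^2 \<le> sqrt ((1/2 + e) * (1/2 - e))"
proof (rule real_le_rsqrt)
  have "e * e \<le> (1/2) * (1/2)" using assms by (intro mult_mono) auto
  then have x: "e^2 \<le> 1/4" by (simp add: power2_eq_square)
  have y: "e^2 * e^2 \<le> e^2 * (1/4)" using x by (intro mult_left_mono) auto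
  have a: "(1/2 - 2 * e^2)^2 = 1/4 - 2 * e^2 + 4 * (e^2 * e^2)"
    by (simp add: power2_eq_square algebra_simps)
  have b: "(1/2 + e) * (1/2 - e) = 1/4 - e^2"
    by (simp add: power2_eq_square algebra_simps)
  show "(1/2 - 2 * e^2)^2 \<le> (1/2 + e) * (1/2 - e)"
    unfolding a b using y by linarith
qed

lemma BC_Tst:
  assumes "0 \<le> e" "e \<le> 1/2"
  shows "BC (Tst (pj e 0 a)) (Tst (pj e 1 a)) \<ge> ennreal (if a \<le> 1 then 1 - 4 * e^2 else 1)"
proof (cases "a \<le> 1")
  case True
  have T1: "pmf (Tst p) 1 = p" "pmf (Tst p) 2 = 1 - p" if "0 \<le> p" "p \<le> 1" for p
    using pmf_Tst[OF that] by simp_all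
  have pb: "0 \<le> 1/2 - e" "1/2 - e \<le> 1" "0 \<le> 1/2 + e" "1/2 + e \<le> 1" using assms by auto
  have pq: "(pj e 0 a = 1/2 + e \<and> pj e 1 a = 1/2 - e) \<or> (pj e 0 a = 1/2 - e \<and> pj e 1 a = 1/2 + e)"
    using True by (cases a) (auto simp: pj_def)
  have E1: "pmf (Tst (pj e 0 a)) 1 * pmf (Tst (pj e 1 a)) 1 = (1/2 + e) * (1/2 - e)"
    using pq
  proof
    assume h: "pj e 0 a = 1/2 + e \<and> pj e 1 a = 1/2 - e"
    show ?thesis unfolding h[THEN conjunct1] h[THEN conjunct2] T1(1)[OF pb(1,2)] T1(1)[OF pb(3,4)] by simp
  next
    assume h: "pj e 0 a = 1/2 - e \<and> pj e 1 a = 1/2 + e"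
    show ?thesis unfolding h[THEN conjunct1] h[THEN conjunct2] T1(1)[OF pb(1,2)] T1(1)[OF pb(3,4)] by simp
  qed
  have E2: "pmf (Tst (pj e 0 a)) 2 * pmf (Tst (pj e 1 a)) 2 = (1/2 + e) * (1/2 - e)"
    using pq
  proof
    assume h: "pj e 0 a = 1/2 + e \<and> pj e 1 a = 1/2 - e"
    show ?thesis unfolding h[THEN conjunct1] h[THEN conjunct2] T1(2)[OF pb(1,2)] T1(2)[OF pb(3,4)]
      by (simp add: algebra_simps)
  next
    assume h: "pj e 0 a = 1/2 - e \<and> pj e 1 a = 1/2 + e"
    show ?thesis unfolding h[THEN conjunct1] h[THEN conjunct2] T1(2)[OF pb(1,2)] T1(2)[OF pb(3,4)]
      by (simp add: algebra_simps)
  qed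
  have "BC (Tst (pj e 0 a)) (Tst (pj e 1 a)) \<ge>
     ennreal (sqrt (pmf (Tst (pj e 0 a)) 1 * pmf (Tst (pj e 1 a)) 1)) +
     ennreal (sqrt (pmf (Tst (pj e 0 a)) 2 * pmf (Tst (pj e 1 a)) 2))"
    unfolding BC_def by (rule BC_lb2)
  then have "BC (Tst (pj e 0 a)) (Tst (pj e 1 a)) \<ge> ennreal (2 * sqrt ((1/2 + e) * (1/2 - e)))"
  proof -
    have X0: "0 \<le> sqrt ((1/2 + e) * (1/2 - e))" using assms by simp
    have "ennreal (2 * sqrt ((1/2 + e) * (1/2 - e))) = ennreal (sqrt ((1/2 + e) * (1/2 - e))) + ennreal (sqrt ((1/2 + e) * (1/2 - e)))"
      using ennreal_plus[OF X0 X0] by (simp only: mult_2)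
    then show ?thesis using \<open>BC _ _ \<ge> _\<close> unfolding E1 E2 by simp
  qed
  moreover have "1 - 4 * e^2 \<le> 2 * sqrt ((1/2 + e) * (1/2 - e))" using sqrt_lb[OF assms(1,2)] by simp
  ultimately have "ennreal (1 - 4 * e^2) \<le> BC (Tst (pj e 0 a)) (Tst (pj e 1 a))"
    by (rule order.trans[OF ennreal_leI, rotated])
  then show ?thesis using True by simp
next
  case False
  then show ?thesis by (simp add: pj_def BC_same)
qed

lemma BC_episode:
  assumes "2 \<le> H" "0 \<le> e" "e \<le> 1/2" "2 \<le> k"
  shows "BC (episode H (MM e 0) (MU k)) (episode H (MM e 1) (MU k)) \<ge> ennreal (1 - 8 * e^2 / k)"
proof -
  obtain n where n: "H = Suc n" using assms(1) by (cases H) auto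
  define \<Phi> where "\<Phi> a s' = map_pmf (Cons (0, a, Rw 1 0 a)) (traj (MM e 0) (MU k) 2 n s')" for a s'
  define b where "b a = (if a \<le> (1::nat) then 1 - 4 * e^2 else 1)" for a
  have "BC (episode H (MM e 0) (MU k)) (episode H (MM e 1) (MU k)) \<ge>
      (\<integral>\<^sup>+a. BC (bind_pmf (Tst (pj e 0 a)) (\<Phi> a)) (bind_pmf (Tst (pj e 1 a)) (\<Phi> a)) \<partial>mu0 k)"
    unfolding episode_eq[OF n] \<Phi>_def[symmetric] by (rule BC_bind_same)
  moreover have "(\<integral>\<^sup>+a. BC (bind_pmf (Tst (pj e 0 a)) (\<Phi> a)) (bind_pmf (Tst (pj e 1 a)) (\<Phi> a)) \<partial>mu0 k)
      \<ge> (\<integral>\<^sup>+a. ennreal (b a) \<partial>mu0 k)"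
  proof (intro nn_integral_mono)
    fix a
    show "ennreal (b a) \<le> BC (bind_pmf (Tst (pj e 0 a)) (\<Phi> a)) (bind_pmf (Tst (pj e 1 a)) (\<Phi> a))"
      using order.trans[OF BC_Tst[OF assms(2,3), of a] BC_bind_same2] unfolding b_def .
  qed
  moreover have "(\<integral>\<^sup>+a. ennreal (b a) \<partial>mu0 k) = (\<Sum>a\<in>{0,1,2}. ennreal (b a) * pmf (mu0 k) a)"
    by (rule nn_integral_measure_pmf_support) (use set_mu0 in auto)
  moreover have "(\<Sum>a\<in>{0,1,2}. ennreal (b a) * pmf (mu0 k) a) = ennreal (1 - 8 * e^2 / k)"
  proof -
    have "e * e \<le> (1/2) * (1/2)" using assms by (intro mult_mono) auto
    then have e2: "4 * e^2 \<le> 1" by (simp add: power2_eq_square)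
    have "(\<Sum>a\<in>{0,1,2}. ennreal (b a) * pmf (mu0 k) a) = (\<Sum>a\<in>{0,1,2}. ennreal (b a * pmf (mu0 k) a))"
      using e2 by (intro sum.cong) (auto simp: b_def ennreal_mult)
    also have "\<dots> = ennreal (\<Sum>a\<in>{0,1,2}. b a * pmf (mu0 k) a)"
      using e2 by (intro sum_ennreal) (auto simp: b_def)
    also have "(\<Sum>a\<in>{0,1,2}. b a * pmf (mu0 k) a) = 1 - 8 * e^2 / k"
      using assms(4) by (simp add: b_def pmf_mu0 field_simps)
    finally show ?thesis .
  qed
  ultimately show ?thesis by (simp only:)
qed

lemma L_sum:
  assumes "2 \<le> H" "0 < e" "GG H e \<le> 1/2"
  shows "GG H e \<le> SubOpt H (MM e 0) \<pi> + SubOpt H (MM e 1) \<pi>"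
proof -
  have H1: "1 \<le> real (H - 1)" using assms(1) by auto
  have e2: "e \<le> 1/2" using assms(3) H1 assms(2) unfolding GG_def
    by (smt (verit) mult_le_cancel_left1)
  have l0: "GG H e * (1 - pmf (\<pi> 1 0) 0) \<le> SubOpt H (MM e 0) \<pi>"
  proof -
    have "0 \<le> (WW H e - AA H e \<pi>) * pmf (\<pi> 1 0) 0"
      using WW_AA_nonneg[of e H \<pi>] e2 assms(2) by simp
    then show ?thesis using SubOpt_lb(1)[OF assms, of 0 \<pi>] by linarith
  qed
  have l1: "GG H e * (1 - pmf (\<pi> 1 0) 1) \<le> SubOpt H (MM e 1) \<pi>"
  proof -
    have "0 \<le> (WW H e - AA H e \<pi>) * pmf (\<pi> 1 0) 1"
      using WW_AA_nonneg[of e H \<pi>] e2 assms(2) by simp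
    then show ?thesis using SubOpt_lb(1)[OF assms, of 1 \<pi>] by linarith
  qed
  have "measure (measure_pmf (\<pi> 1 0)) {0, 1} = pmf (\<pi> 1 0) 0 + pmf (\<pi> 1 0) 1"
    by (simp add: measure_measure_pmf_finite)
  then have s: "pmf (\<pi> 1 0) 0 + pmf (\<pi> 1 0) 1 \<le> 1" by (metis measure_pmf.prob_le_1)
  have G0: "0 < GG H e" using min_gap_MM(3)[OF assms, of 0] by simp
  have "GG H e \<le> GG H e * (1 - pmf (\<pi> 1 0) 0) + GG H e * (1 - pmf (\<pi> 1 0) 1)"
  proof -
    have "GG H e * (1 - pmf (\<pi> 1 0) 0) + GG H e * (1 - pmf (\<pi> 1 0) 1)
        = GG H e * (2 - (pmf (\<pi> 1 0) 0 + pmf (\<pi> 1 0) 1))" by (simp add: algebra_simps)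
    also have "\<dots> \<ge> GG H e * 1" using s G0 by (intro mult_left_mono) auto
    finally show ?thesis by simp
  qed
  then show ?thesis using l0 l1 by linarith
qed

lemma nn_exp:
  fixes L :: "'a \<Rightarrow> real"
  assumes "\<And>x. 0 \<le> L x" "\<And>x. L x \<le> B"
  shows "(\<integral>\<^sup>+x. ennreal (L x) \<partial>measure_pmf p) = ennreal (measure_pmf.expectation p L)"
  by (rule nn_integral_eq_integral)
     (use assms in \<open>auto intro!: measure_pmf.integrable_const_bound[where B=B] order.trans[OF _ assms(2)]\<close>)

lemma main_lecam:
  assumes "2 \<le> H" "0 < e" "GG H e \<le> 1/4" "2 \<le> k" "0 < K"
    and ee: "8 * e^2 / k = 1 / (2 * real K)"
  shows "\<exists>j\<le>1. measure_pmf.expectation (data_dist H K (MM e j) (MU k)) (\<lambda>D. SubOpt H (MM e j) (Algo D))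
           \<ge> GG H e / 16"
proof -
  have G2: "GG H e \<le> 1/2" using assms(3) by simp
  have H1: "1 \<le> real (H - 1)" using assms(1) by auto
  have e2: "e \<le> 1/2" using G2 H1 assms(2) unfolding GG_def
    by (smt (verit) mult_le_cancel_left1)
  define P where "P j = data_dist H K (MM e j) (MU k)" for j
  define L where "L j D = SubOpt H (MM e j) (Algo D)" for j D
  define E where "E j = measure_pmf.expectation (P j) (L j)" for j
  have Lnn: "0 \<le> L j D" if "j \<le> 1" for j D
    unfolding L_def using SubOpt_lb(2)[OF assms(1,2) G2 that] .
  have Lub: "L j D \<le> WW H e" if "j \<le> 1" for j D
    unfolding L_def using SubOpt_lb(3)[OF assms(1,2) G2 that] .
  have LG: "GG H e \<le> L 0 D + L 1 D" for D
    unfolding L_def using L_sum[OF assms(1,2) G2] .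
  have G0: "0 \<le> GG H e" using min_gap_MM(3)[OF assms(1,2) G2, of 0] by simp
  have lc: "ennreal (GG H e) * BC (P 0) (P 1) ^ 2 \<le>
      2 * ((\<integral>\<^sup>+x. ennreal (L 0 x) \<partial>P 0) + (\<integral>\<^sup>+x. ennreal (L 1 x) \<partial>P 1))"
    by (rule lecam) (use Lnn LG G0 in auto)
  have I: "(\<integral>\<^sup>+x. ennreal (L j x) \<partial>P j) = ennreal (E j)" if "j \<le> 1" for j
    unfolding E_def by (rule nn_exp[where B="WW H e"]) (use Lnn Lub that in auto)
  have x0: "0 \<le> 1 - 8 * e^2 / k" using ee assms(5) by simp
  have a1: "BC (P 0) (P 1) \<ge> BC (episode H (MM e 0) (MU k)) (episode H (MM e 1) (MU k)) ^ K"
    unfolding P_def data_dist_def by (rule BC_iid)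
  have a2: "BC (episode H (MM e 0) (MU k)) (episode H (MM e 1) (MU k)) ^ K \<ge> ennreal (1 - 8 * e^2 / k) ^ K"
    by (intro power_mono BC_episode[OF assms(1) _ e2 assms(4)]) (use assms(2) in auto)
  have a3: "ennreal (1 - 8 * e^2 / k) ^ K = ennreal ((1 - 8 * e^2 / k) ^ K)"
    using x0 by (simp add: ennreal_power)
  have a4: "(1 - 8 * e^2 / k) ^ K \<ge> 1/2"
  proof -
    have "1 + real K * (- (1 / (2 * real K))) \<le> (1 + (- (1 / (2 * real K)))) ^ K"
      by (rule Bernoulli_inequality) (use assms(5) in \<open>simp add: field_simps\<close>)
    then show ?thesis using assms(5) unfolding ee by simp
  qed
  have "ennreal (1/2) \<le> ennreal ((1 - 8 * e^2 / k) ^ K)" using a4 by (rule ennreal_leI)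
  also have "\<dots> = ennreal (1 - 8 * e^2 / k) ^ K" using a3 by simp
  also note a2
  also note a1
  finally have BC2: "BC (P 0) (P 1) \<ge> ennreal (1/2)" .
  have "ennreal (1/4) \<le> BC (P 0) (P 1) ^ 2"
  proof -
    have "ennreal (1/2) ^ 2 \<le> BC (P 0) (P 1) ^ 2" by (rule power_mono[OF BC2]) simp
    moreover have "ennreal (1/2) ^ 2 = ennreal ((1/2) ^ 2)" by (rule ennreal_power) simp
    moreover have "(1/2::real) ^ 2 = 1/4" by (simp add: power2_eq_square)
    ultimately show ?thesis by simp
  qed
  have E0: "0 \<le> E j" if "j \<le> 1" for j unfolding E_def
    using Lnn[OF that] by (intro Bochner_Integration.integral_nonneg) auto
  have eqR: "2 * ((\<integral>\<^sup>+x. ennreal (L 0 x) \<partial>P 0) + (\<integral>\<^sup>+x. ennreal (L 1 x) \<partial>P 1))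
      = ennreal (2 * (E 0 + E 1))"
  proof -
    have "ennreal (2 * (E 0 + E 1)) = ennreal 2 * ennreal (E 0 + E 1)"
      by (rule ennreal_mult) (use E0[of 0] E0[of 1] in auto)
    also have "ennreal (E 0 + E 1) = ennreal (E 0) + ennreal (E 1)"
      by (rule ennreal_plus) (use E0[of 0] E0[of 1] in auto)
    finally show ?thesis using I[of 0] I[of 1] by simp
  qed
  have eqL: "ennreal (GG H e * (1/4)) = ennreal (GG H e) * ennreal (1/4)"
    by (rule ennreal_mult) (use G0 in auto)
  have "ennreal (GG H e) * ennreal (1/4) \<le> ennreal (GG H e) * BC (P 0) (P 1) ^ 2"
    using \<open>ennreal (1/4) \<le> _\<close> by (rule mult_left_mono) simp
  also note lc
  also note eqR
  finally have "ennreal (GG H e * (1/4)) \<le> ennreal (2 * (E 0 + E 1))" unfolding eqL .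
  then have "GG H e * (1/4) \<le> 2 * (E 0 + E 1)"
    using E0[of 0] E0[of 1] by (subst (asm) ennreal_le_iff) auto
  then have "GG H e / 16 \<le> E 0 \<or> GG H e / 16 \<le> E 1" by (cases "GG H e / 16 \<le> E 0") auto
  then show ?thesis unfolding E_def P_def L_def
  proof
    assume "GG H e / 16 \<le> measure_pmf.expectation (data_dist H K (MM e 0) (MU k)) (\<lambda>D. SubOpt H (MM e 0) (Algo D))"
    then show ?thesis by (intro exI[of _ 0]) simp
  next
    assume "GG H e / 16 \<le> measure_pmf.expectation (data_dist H K (MM e 1) (MU k)) (\<lambda>D. SubOpt H (MM e 1) (Algo D))"
    then show ?thesis by (intro exI[of _ 1]) simp
  qed
qed

theorem theorem3:
  "\<exists>c::real. c > 0 \<and>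
     (\<forall>H::nat. H \<ge> 2 \<longrightarrow>
      (\<forall>\<kappa>::nat \<Rightarrow> real. (\<forall>h\<ge>1. \<kappa> h \<ge> 2) \<longrightarrow>
       (\<exists>K0::nat. \<forall>K\<ge>K0. \<forall>Algo :: dataset \<Rightarrow> policy.
         \<exists>(M::mdp) (mu::policy).
           linear_mdp H M \<and>
           gap_set H M \<noteq> {} \<and> min_gap H M > 0 \<and>
           (\<exists>\<pi>. optimal_policy H M \<pi>) \<and>
           (\<forall>\<pi>. optimal_policy H M \<pi> \<longrightarrow>
              (\<forall>h\<in>{1..H}. \<forall>s a. visit M \<pi> h s a \<le> \<kappa> h * visit M mu h s a)) \<and>
           measure_pmf.expectation (data_dist H K M mu) (\<lambda>D. SubOpt H M (Algo D))
             \<ge> c * Min (\<kappa> ` {1..H}) * real H ^ 2 / (real K * min_gap H M))))"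
proof (intro exI[of _ "1/1024::real"] conjI allI impI)
  show "(0::real) < 1/1024" by simp
  fix H :: nat assume H: "H \<ge> 2"
  fix \<kappa> :: "nat \<Rightarrow> real" assume kap: "\<forall>h\<ge>1. \<kappa> h \<ge> 2"
  define k where "k = \<kappa> 1"
  have k2: "2 \<le> k" using kap by (simp add: k_def)
  show "\<exists>K0::nat. \<forall>K\<ge>K0. \<forall>Algo :: dataset \<Rightarrow> policy.
         \<exists>(M::mdp) (mu::policy).
           linear_mdp H M \<and>
           gap_set H M \<noteq> {} \<and> min_gap H M > 0 \<and>
           (\<exists>\<pi>. optimal_policy H M \<pi>) \<and>
           (\<forall>\<pi>. optimal_policy H M \<pi> \<longrightarrow>
              (\<forall>h\<in>{1..H}. \<forall>s a. visit M \<pi> h s a \<le> \<kappa> h * visit M mu h s a)) \<and>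
           measure_pmf.expectation (data_dist H K M mu) (\<lambda>D. SubOpt H M (Algo D))
             \<ge> 1/1024 * Min (\<kappa> ` {1..H}) * real H ^ 2 / (real K * min_gap H M)"
  proof (intro exI[of _ "nat \<lceil>k * real H ^ 2\<rceil> + 1"] allI impI)
    fix K :: nat and Algo :: "dataset \<Rightarrow> policy"
    assume K: "nat \<lceil>k * real H ^ 2\<rceil> + 1 \<le> K"
    have Kpos: "0 < K" using K by simp
    have KH: "k * real H ^ 2 \<le> real K"
    proof -
      have a: "k * real H ^ 2 \<le> real (nat \<lceil>k * real H ^ 2\<rceil>)" by (rule real_nat_ceiling_ge)
      have "nat \<lceil>k * real H ^ 2\<rceil> \<le> K" using K by linarith
      then have b: "real (nat \<lceil>k * real H ^ 2\<rceil>) \<le> real K" by (simp only: of_nat_le_iff)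
      from a b show ?thesis by (rule order.trans)
    qed
    define n where "n = real (H - 1)"
    have n1: "1 \<le> n" and Hn: "real H \<le> 2 * n" using H unfolding n_def by auto
    define e where "e = sqrt (k / (16 * real K))"
    have e0: "0 < e" unfolding e_def using k2 Kpos by simp
    have esq: "e^2 = k / (16 * real K)" unfolding e_def using k2 Kpos by simp
    have ee: "8 * e^2 / k = 1 / (2 * real K)" unfolding esq using k2 Kpos by (simp add: field_simps)
    have GGe: "GG H e = e * n" unfolding GG_def n_def by simp
    have GG2: "(GG H e)^2 = k * n^2 / (16 * real K)"
      unfolding GGe by (simp add: power_mult_distrib esq)
    have "k * n^2 \<le> k * real H ^ 2"
      using n1 H k2 unfolding n_def by (intro mult_left_mono power_mono) auto
    then have "k * n^2 \<le> real K" using KH by linarith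
    then have "(GG H e)^2 \<le> (1/4)^2" unfolding GG2 using Kpos by (simp add: field_simps power2_eq_square)
    then have G4: "GG H e \<le> 1/4" by (rule power2_le_imp_le) simp
    have G2: "GG H e \<le> 1/2" using G4 by simp
    have "e \<le> e * n" using n1 e0 by simp
    then have e2: "e \<le> 1/2" using G4 unfolding GGe by linarith
    obtain j where j: "j \<le> 1" and Ej: "measure_pmf.expectation (data_dist H K (MM e j) (MU k))
        (\<lambda>D. SubOpt H (MM e j) (Algo D)) \<ge> GG H e / 16"
      using main_lecam[OF H e0 G4 k2 Kpos ee, of Algo] by blast
    have mg: "GG H e \<le> min_gap H (MM e j)" and Gp: "0 < GG H e"
      using min_gap_MM[OF H e0 G2 j] by auto
    show "\<exists>(M::mdp) (mu::policy).
           linear_mdp H M \<and>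
           gap_set H M \<noteq> {} \<and> min_gap H M > 0 \<and>
           (\<exists>\<pi>. optimal_policy H M \<pi>) \<and>
           (\<forall>\<pi>. optimal_policy H M \<pi> \<longrightarrow>
              (\<forall>h\<in>{1..H}. \<forall>s a. visit M \<pi> h s a \<le> \<kappa> h * visit M mu h s a)) \<and>
           measure_pmf.expectation (data_dist H K M mu) (\<lambda>D. SubOpt H M (Algo D))
             \<ge> 1/1024 * Min (\<kappa> ` {1..H}) * real H ^ 2 / (real K * min_gap H M)"
    proof -
      have c5: "\<forall>\<pi>. optimal_policy H (MM e j) \<pi> \<longrightarrow>
              (\<forall>h\<in>{1..H}. \<forall>s a. visit (MM e j) \<pi> h s a \<le> \<kappa> h * visit (MM e j) (MU k) h s a)"
      proof (intro allI impI ballI)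
        fix \<pi> h s a assume "optimal_policy H (MM e j) \<pi>" "h \<in> {1..H}"
        then show "visit (MM e j) \<pi> h s a \<le> \<kappa> h * visit (MM e j) (MU k) h s a"
          unfolding optimal_policy_def k_def by (intro coverage[OF H e0 G4 j _ kap])
      qed
      have c1: "linear_mdp H (MM e j)" using linear_MM e0 e2 by simp
      have c2: "gap_set H (MM e j) \<noteq> {}" using min_gap_MM[OF H e0 G2 j] by simp
      have c3: "0 < min_gap H (MM e j)" using mg Gp by simp
      have c4: "\<exists>\<pi>. optimal_policy H (MM e j) \<pi>"
        using pistar_opt[OF H _ e2 j] e0 unfolding optimal_policy_def by auto
      define m where "m = Min (\<kappa> ` {1..H})"
      have m: "0 \<le> m" "m \<le> k"
      proof -
        have fin: "finite (\<kappa> ` {1..H})" "\<kappa> ` {1..H} \<noteq> {}" using H by auto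
        show "m \<le> k" unfolding m_def k_def using H by (intro Min_le) auto
        show "0 \<le> m" unfolding m_def using fin kap by (subst Min_ge_iff) auto
      qed
      have "1/1024 * m * real H ^ 2 / (real K * min_gap H (MM e j))
          \<le> 1/1024 * k * real H ^ 2 / (real K * GG H e)"
      proof (rule frac_le)
        show "0 \<le> 1/1024 * k * real H ^ 2" using k2 by simp
        show "1/1024 * m * real H ^ 2 \<le> 1/1024 * k * real H ^ 2"
          using m(2) by (intro mult_right_mono) auto
        show "0 < real K * GG H e" using Kpos Gp by simp
        show "real K * GG H e \<le> real K * min_gap H (MM e j)" using mg by (intro mult_left_mono) auto
      qed
      also have "\<dots> \<le> GG H e / 16"
      proof -
        have "real H ^ 2 \<le> (2 * n) ^ 2" using Hn by (intro power_mono) auto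
        then have "k * real H ^ 2 \<le> k * (4 * n^2)" using k2 by (intro mult_left_mono) (auto simp: power_mult_distrib)
        moreover have "GG H e / 16 * (real K * GG H e) = real K * (GG H e)^2 / 16"
          by (simp add: power2_eq_square)
        moreover have "real K * (GG H e)^2 / 16 = k * n^2 / 256"
          unfolding GG2 using Kpos by simp
        moreover have "k * (4 * n^2) = 4 * (k * n^2)" by simp
        ultimately have "1/1024 * k * real H ^ 2 \<le> GG H e / 16 * (real K * GG H e)" by linarith
        then show ?thesis using Kpos Gp by (simp add: pos_divide_le_eq)
      qed
      also note Ej
      finally have c6: "measure_pmf.expectation (data_dist H K (MM e j) (MU k)) (\<lambda>D. SubOpt H (MM e j) (Algo D))
             \<ge> 1/1024 * Min (\<kappa> ` {1..H}) * real H ^ 2 / (real K * min_gap H (MM e j))"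
        unfolding m_def .
      show ?thesis
        apply (rule exI[of _ "MM e j"], rule exI[of _ "MU k"])
        using c1 c2 c3 c4 c5 c6 by (intro conjI)
    qed
  qed
qed

end
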